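(* Let $\beta$ be any real number and let $\alpha>\frac{1+\sqrt{33}}{2}$. Then there exists $N$ such that for every integer $n\geqslant N$ the polynomial $\phi_n^{(\alpha,\beta)}(\mu)$ has at least one non-real zero.
   Context: For real $a$ and integer $m\geqslant0$, $(a)_m=a(a+1)\cdots(a+m-1)$, $(a)_0=1$. For real $\alpha>-1$ and real $\beta$, $$\phi_n^{(\alpha,\beta)}(\mu)=\frac{(\alpha+1)_n}{n!}\sum_{k=0}^{[n/2]}\frac{(-n)_{2k}(n+\alpha+\beta+1)_{2k}}{(\alpha+1)_{2k}}\Big(\frac{\mu}{4}\Big)^k,$$ which equals $\sum_{k=0}^{[n/2]}\big(\tfrac{d^{2k}}{dx^{2k}}P_n^{(\alpha,\beta)}(x)\big)\big|_{x=1}\mu^k$ for the Jacobi polynomial $P_n^{(\alpha,\beta)}$; here $[a]$ denotes the integer part of $a$. *)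

theory Defs
  imports "HOL-Analysis.Analysis" "HOL-Computational_Algebra.Polynomial"
begin

definition phi_coeff :: "real \<Rightarrow> real \<Rightarrow> nat \<Rightarrow> nat \<Rightarrow> real" where
  "phi_coeff \<alpha> \<beta> n k =
     pochhammer (\<alpha> + 1) n / fact n *
     (pochhammer (- real n) (2*k) * pochhammer (real n + \<alpha> + \<beta> + 1) (2*k)
        / pochhammer (\<alpha> + 1) (2*k)) * (1/4) ^ k"

definition phi_poly :: "real \<Rightarrow> real \<Rightarrow> nat \<Rightarrow> real poly" where
  "phi_poly \<alpha> \<beta> n = (\<Sum>k\<le>n div 2. monom (phi_coeff \<alpha> \<beta> n k) k)"

end

theory Submission
  imports Defs "HOL-Computational_Algebra.Fundamental_Theorem_Algebra"
begin

lemma lag_prod: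
  fixes r :: "nat \<Rightarrow> real" and d :: nat
  shows "2 * coeff (\<Prod>i<d. [:-r i,1:]) 0 * coeff (\<Prod>i<d. [:-r i,1:]) 2
          \<le> (coeff (\<Prod>i<d. [:-r i,1:]) 1)^2"
proof (induction d)
  case 0
  then show ?case by simp
next
  case (Suc d)
  define f where "f = (\<Prod>i<d. [:-r i,1:])"
  have e: "(\<Prod>i<Suc d. [:-r i,1:]) = smult (- r d) f + pCons 0 f"
    by (simp add: f_def mult.commute)
  have IH: "2 * coeff f 0 * coeff f 2 \<le> (coeff f 1)^2" using Suc.IH f_def by simp
  have c0: "coeff (smult (- r d) f + pCons 0 f) 0 = - r d * coeff f 0" by simp
  have c1: "coeff (smult (- r d) f + pCons 0 f) 1 = - r d * coeff f 1 + coeff f 0"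
    by (simp add: coeff_pCons split: nat.split)
  have c2: "coeff (smult (- r d) f + pCons 0 f) 2 = - r d * coeff f 2 + coeff f 1"
    by (simp add: coeff_pCons numeral_2_eq_2)
  have id: "(- r d * coeff f 1 + coeff f 0)^2 - 2 * (- r d * coeff f 0) * (- r d * coeff f 2 + coeff f 1)
     = (r d)^2 * ((coeff f 1)^2 - 2 * coeff f 0 * coeff f 2) + (coeff f 0)^2"
    by algebra
  have nn: "(r d)^2 * ((coeff f 1)^2 - 2 * coeff f 0 * coeff f 2) \<ge> 0"
    using IH by simp
  have sq: "(coeff f 0)^2 \<ge> 0" by simp
  show ?case unfolding e c0 c1 c2 using id nn sq by linarith
qed

lemma map_poly_of_real_mult:
  "map_poly (of_real :: real \<Rightarrow> complex) (p * q) = map_poly of_real p * map_poly of_real q"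
  by (rule poly_eqI) (simp add: coeff_mult coeff_map_poly)

lemma map_prod_real:
  fixes d :: nat and z :: "nat \<Rightarrow> complex"
  assumes "\<forall>i<d. Im (z i) = 0"
  shows "map_poly (of_real :: real \<Rightarrow> complex) (\<Prod>i<d. [:-Re (z i),1:]) = (\<Prod>i<d. [:-z i,1:])"
  using assms
proof (induction d)
  case 0
  then show ?case by simp
next
  case (Suc d)
  have "Im (z d) = 0" using Suc.prems by simp
  hence z: "complex_of_real (Re (z d)) = z d" by (intro complex_eqI) auto
  have "map_poly (of_real :: real \<Rightarrow> complex) [:-Re (z d),1:] = [:-z d,1:]"
    using z by (simp add: map_poly_pCons)
  moreover have "map_poly (of_real :: real \<Rightarrow> complex) (\<Prod>i<d. [:-Re (z i),1:]) = (\<Prod>i<d. [:-z i,1:])"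
    using Suc by simp
  ultimately show ?case by (simp only: prod.lessThan_Suc map_poly_of_real_mult)
qed

lemma phi_ineq:
  fixes \<alpha> \<beta> :: real
  assumes a: "\<alpha> > (1 + sqrt 33) / 2" and n4: "n \<ge> 4"
    and nb: "real n > (4*((\<alpha>+3)*(\<alpha>+4)) + 5*(\<alpha>^2-\<alpha>-8)) / (\<alpha>^2-\<alpha>-8)"
    and Mp: "real n + \<alpha> + \<beta> + 1 > 0"
  shows "(phi_coeff \<alpha> \<beta> n 1)^2 < 2 * phi_coeff \<alpha> \<beta> n 0 * phi_coeff \<alpha> \<beta> n 2"
proof -
  define D where "D = \<alpha>^2-\<alpha>-8"
  define E where "E = (\<alpha>+3)*(\<alpha>+4)"
  define P2 where "P2 = (\<alpha>+1)*(\<alpha>+2)"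
  define x where "x = real n"
  define M where "M = x + \<alpha> + \<beta> + 1"
  define C where "C = pochhammer (\<alpha> + 1) n / fact n"
  have s33: "sqrt 33 > 5" by (rule real_less_rsqrt) simp
  have apos: "\<alpha> > 3" using a s33 by (simp add: field_simps)
  have "2*\<alpha> - 1 > sqrt 33" using a by (simp add: field_simps)
  hence "(2*\<alpha> - 1)^2 > (sqrt 33)^2"
    by (intro power_strict_mono) auto
  hence Dp: "D > 0" unfolding D_def by (simp add: power2_eq_square algebra_simps)
  have Ep: "E > 0" using apos unfolding E_def by simp
  have P2p: "P2 > 0" using apos unfolding P2_def by simp
  have x4: "x \<ge> 4" using n4 unfolding x_def by simp
  have Mp': "M > 0" using Mp unfolding M_def x_def by simp
  have xb: "x > (4*E + 5*D)/D" using nb unfolding x_def E_def D_def .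
  have Cnz: "C \<noteq> 0" unfolding C_def using apos
    by (simp add: pochhammer_eq_0_iff)
  have c0: "phi_coeff \<alpha> \<beta> n 0 = C" unfolding phi_coeff_def C_def by simp
  have p1: "pochhammer (- x) 2 = x*(x-1)" by (simp add: pochhammer_Suc numeral_2_eq_2 algebra_simps)
  have p2: "pochhammer (- x) 4 = x*(x-1)*(x-2)*(x-3)" by (simp add: pochhammer_Suc eval_nat_numeral algebra_simps)
  have q1: "pochhammer M 2 = M*(M+1)" by (simp add: pochhammer_Suc numeral_2_eq_2 algebra_simps)
  have q2: "pochhammer M 4 = M*(M+1)*(M+2)*(M+3)" by (simp add: pochhammer_Suc eval_nat_numeral algebra_simps)
  have r1: "pochhammer (\<alpha>+1) 2 = P2" unfolding P2_def by (simp add: pochhammer_Suc numeral_2_eq_2 algebra_simps)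
  have r2: "pochhammer (\<alpha>+1) 4 = P2*E" unfolding P2_def E_def by (simp add: pochhammer_Suc eval_nat_numeral algebra_simps)
  have c1: "phi_coeff \<alpha> \<beta> n 1 = C * (x*(x-1)*M*(M+1)/P2) / 4"
    unfolding phi_coeff_def C_def[symmetric] M_def[symmetric] x_def[symmetric]
    by (simp add: p1 q1 r1 mult.assoc)
  have c2: "phi_coeff \<alpha> \<beta> n 2 = C * (x*(x-1)*(x-2)*(x-3)*M*(M+1)*(M+2)*(M+3)/(P2*E)) / 16"
    unfolding phi_coeff_def C_def[symmetric] M_def[symmetric] x_def[symmetric]
    by (simp add: p2 q2 r2 mult.assoc power2_eq_square)
  define G where "G = x*(x-1)*M*(M+1)"
  define H where "H = (x-2)*(x-3)*(M+2)*(M+3)"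
  have Gp: "G > 0" unfolding G_def using x4 Mp' by simp
  have F: "2*P2 = E + D" unfolding P2_def E_def D_def by (simp add: power2_eq_square algebra_simps)
  have "4*E+5*D < x*D" using xb Dp by (simp add: pos_divide_less_eq)
  hence "(4*E+5*D)*x < (x*D)*x" using x4 by (intro mult_strict_right_mono) auto
  hence q: "x*(x-1)*E < (x-2)*(x-3)*(E+D)" using Dp Ep by (simp add: algebra_simps)
  have mm: "M*(M+1) < (M+2)*(M+3)" using Mp' by (simp add: algebra_simps)
  have x23: "(x-2)*(x-3)*(E+D) > 0" using x4 Ep Dp by simp
  have "G*E = (x*(x-1)*E)*(M*(M+1))" unfolding G_def by (simp add: algebra_simps)
  also have "\<dots> < ((x-2)*(x-3)*(E+D))*(M*(M+1))"
    using q Mp' by (intro mult_strict_right_mono) auto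
  also have "\<dots> < ((x-2)*(x-3)*(E+D))*((M+2)*(M+3))"
    using mm x23 by (intro mult_strict_left_mono) auto
  also have "\<dots> = 2*P2*H" unfolding F H_def by (simp add: algebra_simps)
  finally have GE: "G*E < 2*P2*H" .
  have "(phi_coeff \<alpha> \<beta> n 1)^2 = C^2 * G * (G*E) / (16*P2^2*E)"
    unfolding c1 G_def using Ep P2p by (simp add: field_simps power2_eq_square)
  also have "\<dots> < C^2 * G * (2*P2*H) / (16*P2^2*E)"
    using GE Gp Cnz Ep P2p by (intro divide_strict_right_mono mult_strict_left_mono) auto
  also have "\<dots> = 2 * phi_coeff \<alpha> \<beta> n 0 * phi_coeff \<alpha> \<beta> n 2"
    unfolding c0 c2 G_def H_def using Ep P2p by (simp add: field_simps power2_eq_square)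
  finally show ?thesis .
qed
lemma coeff_phi_poly:
  assumes "k \<le> n div 2"
  shows "coeff (phi_poly \<alpha> \<beta> n) k = phi_coeff \<alpha> \<beta> n k"
proof -
  have "coeff (phi_poly \<alpha> \<beta> n) k = (\<Sum>j\<le>n div 2. if j = k then phi_coeff \<alpha> \<beta> n j else 0)"
    unfolding phi_poly_def coeff_sum coeff_monom by (rule sum.cong) auto
  also have "\<dots> = phi_coeff \<alpha> \<beta> n k"
    using assms by (subst sum.delta) auto
  finally show ?thesis .
qed

theorem mainTheorem14:
  fixes \<alpha> \<beta> :: real
  assumes "\<alpha> > (1 + sqrt 33) / 2"
  shows "\<exists>N::nat. \<forall>n\<ge>N. \<exists>z::complex.
           poly (map_poly complex_of_real (phi_poly \<alpha> \<beta> n)) z = 0 \<and> Im z \<noteq> 0"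
proof -
  define K where "K = (4*((\<alpha>+3)*(\<alpha>+4)) + 5*(\<alpha>^2-\<alpha>-8)) / (\<alpha>^2-\<alpha>-8)"
  define N where "N = 4 + nat \<lceil>K\<rceil> + nat \<lceil>-(\<alpha>+\<beta>+1)\<rceil>"
  show ?thesis
  proof (rule exI[of _ N], intro allI impI)
    fix n assume nN: "n \<ge> N"
    have n4: "n \<ge> 4" using nN unfolding N_def by simp
    have h1: "K \<le> real (nat \<lceil>K\<rceil>)" by (rule real_nat_ceiling_ge)
    have h2: "-(\<alpha>+\<beta>+1) \<le> real (nat \<lceil>-(\<alpha>+\<beta>+1)\<rceil>)" by (rule real_nat_ceiling_ge)
    have rn: "real n \<ge> 4 + real (nat \<lceil>K\<rceil>) + real (nat \<lceil>-(\<alpha>+\<beta>+1)\<rceil>)"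
      using nN unfolding N_def by linarith
    have nb: "real n > K" using rn h1 h2 by linarith
    have Mp: "real n + \<alpha> + \<beta> + 1 > 0" using rn h1 h2 by linarith
    have ineq: "(phi_coeff \<alpha> \<beta> n 1)^2 < 2 * phi_coeff \<alpha> \<beta> n 0 * phi_coeff \<alpha> \<beta> n 2"
      using phi_ineq[OF assms n4 _ Mp] nb unfolding K_def by blast
    show "\<exists>z::complex. poly (map_poly complex_of_real (phi_poly \<alpha> \<beta> n)) z = 0 \<and> Im z \<noteq> 0"
    proof (rule ccontr)
      assume nz: "\<not> (\<exists>z::complex. poly (map_poly complex_of_real (phi_poly \<alpha> \<beta> n)) z = 0 \<and> Im z \<noteq> 0)"
      define p where "p = phi_poly \<alpha> \<beta> n"
      define P where "P = map_poly complex_of_real p"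
      have rr: "\<And>z. poly P z = 0 \<Longrightarrow> Im z = 0" using nz unfolding P_def p_def by auto
      have cP: "\<And>k. coeff P k = of_real (coeff p k)" unfolding P_def by (simp add: coeff_map_poly)
      obtain root where dec: "smult (lead_coeff P) (\<Prod>i<degree P. [:-root i, 1:]) = P"
        by (rule complex_poly_decompose')
      have ri: "\<forall>i<degree P. Im (root i) = 0"
      proof (intro allI impI)
        fix i assume i: "i < degree P"
        have "poly P (root i) = lead_coeff P * (\<Prod>j<degree P. poly [:-root j, 1:] (root i))"
          by (subst dec[symmetric]) (simp add: poly_prod)
        also have "(\<Prod>j<degree P. poly [:-root j, 1:] (root i)) = 0"
          using i by (intro prod_zero) auto
        finally show "Im (root i) = 0" using rr by simp
      qed
      define Q where "Q = (\<Prod>i<degree P. [:-Re (root i),1:])"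
      have PQ: "P = smult (lead_coeff P) (map_poly of_real Q)"
        unfolding Q_def map_prod_real[OF ri] using dec by simp
      define c where "c = coeff p (degree P)"
      have ck: "\<And>k. coeff p k = c * coeff Q k"
      proof -
        fix k
        have "complex_of_real (coeff p k) = coeff P k" by (simp add: cP)
        also have "\<dots> = of_real c * of_real (coeff Q k)"
          by (subst PQ) (simp add: coeff_map_poly cP c_def)
        finally show "coeff p k = c * coeff Q k"
          by (metis of_real_eq_iff of_real_mult)
      qed
      have lag: "2 * coeff Q 0 * coeff Q 2 \<le> (coeff Q 1)^2" unfolding Q_def by (rule lag_prod)
      have "2 * coeff p 0 * coeff p 2 = c^2 * (2 * coeff Q 0 * coeff Q 2)"
        by (simp add: ck power2_eq_square algebra_simps)
      also have "\<dots> \<le> c^2 * (coeff Q 1)^2" using lag by (intro mult_left_mono) auto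
      also have "\<dots> = (coeff p 1)^2" by (simp add: ck power_mult_distrib)
      finally have "2 * coeff p 0 * coeff p 2 \<le> (coeff p 1)^2" .
      moreover have "coeff p 0 = phi_coeff \<alpha> \<beta> n 0" "coeff p 1 = phi_coeff \<alpha> \<beta> n 1"
        "coeff p 2 = phi_coeff \<alpha> \<beta> n 2"
        using n4 unfolding p_def by (auto intro!: coeff_phi_poly)
      ultimately show False using ineq by simp
    qed
  qed
qed

end
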